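(* Suppose that $X$ is a graph and $p$ is any integer. Then every cellular cycle $\alpha \in Z_1(X;\mathbb{Z}/p\mathbb{Z})$ has a preimage $\tilde \alpha \in Z_1(X;\mathbb{Z})$ such that $\mathrm{Mass}(\tilde \alpha) \leq p\,\mathrm{Mass}(\alpha)$.
   Context: For an integral chain $\sum b_i\Delta_i$, $\mathrm{Mass}=\sum|b_i|$; for a chain with coefficients in $\mathbb{Z}/p\mathbb{Z}$, $\mathrm{Mass}$ is the number of cells in its support. *)

theory Defs
  imports Main
begin

text \<open>A graph (1-dimensional CW complex, loops and multiple edges allowed) is given by
 an edge type 'e, a vertex type 'v, and for every edge a chosen orientation with
 endpoints src e and tgt e.\<close>

definition supp :: "('e \<Rightarrow> int) \<Rightarrow> 'e set" where
  "supp c = {e. c e \<noteq> 0}"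

definition bdry :: "('e \<Rightarrow> 'v) \<Rightarrow> ('e \<Rightarrow> 'v) \<Rightarrow> ('e \<Rightarrow> int) \<Rightarrow> 'v \<Rightarrow> int" where
  "bdry src tgt c v =
     (\<Sum>e\<in>{e\<in>supp c. tgt e = v}. c e) - (\<Sum>e\<in>{e\<in>supp c. src e = v}. c e)"

definition int_cycle :: "('e \<Rightarrow> 'v) \<Rightarrow> ('e \<Rightarrow> 'v) \<Rightarrow> ('e \<Rightarrow> int) \<Rightarrow> bool" where
  "int_cycle src tgt c \<longleftrightarrow> finite (supp c) \<and> (\<forall>v. bdry src tgt c v = 0)"

text \<open>Chains with Z/pZ coefficients are represented by their canonical representatives
 in {0..<p}; such a chain is a cycle iff its integral boundary vanishes mod p.\<close>
definition modp_chain :: "int \<Rightarrow> ('e \<Rightarrow> int) \<Rightarrow> bool" where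
  "modp_chain p a \<longleftrightarrow> finite (supp a) \<and> (\<forall>e. 0 \<le> a e \<and> a e < p)"

definition modp_cycle :: "('e \<Rightarrow> 'v) \<Rightarrow> ('e \<Rightarrow> 'v) \<Rightarrow> int \<Rightarrow> ('e \<Rightarrow> int) \<Rightarrow> bool" where
  "modp_cycle src tgt p a \<longleftrightarrow> modp_chain p a \<and> (\<forall>v. bdry src tgt a v mod p = 0)"

definition mass_int :: "('e \<Rightarrow> int) \<Rightarrow> int" where
  "mass_int c = (\<Sum>e\<in>supp c. \<bar>c e\<bar>)"

definition mass_modp :: "('e \<Rightarrow> int) \<Rightarrow> nat" where
  "mass_modp a = card (supp a)"

end

theory Submission
  imports Defs
begin

definition DD :: "('e \<Rightarrow> 'v) \<Rightarrow> ('e \<Rightarrow> 'v) \<Rightarrow> 'e set \<Rightarrow> ('e \<Rightarrow> int) \<Rightarrow> 'v \<Rightarrow> int" where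
  "DD s t A c v = (\<Sum>e\<in>A. c e * (of_bool (t e = v) - of_bool (s e = v)))"

definition stp :: "('e \<Rightarrow> 'v) \<Rightarrow> ('e \<Rightarrow> 'v) \<Rightarrow> 'e set \<Rightarrow> 'e set \<Rightarrow> ('v \<times> 'v) set" where
  "stp s t A S = {(x,y). \<exists>e\<in>A. (e \<notin> S \<and> t e = x \<and> s e = y) \<or> (e \<in> S \<and> s e = x \<and> t e = y)}"

lemma bdry_DD:
  assumes "finite A" "supp c \<subseteq> A"
  shows "bdry s t c v = DD s t A c v"
proof -
  have fs: "finite (supp c)" using assms finite_subset by blast
  have "DD s t A c v = DD s t (supp c) c v"
    unfolding DD_def by (rule sum.mono_neutral_right) (use assms in \<open>auto simp: supp_def\<close>)
  also have "\<dots> = (\<Sum>e\<in>supp c. (if t e = v then c e else 0) - (if s e = v then c e else 0))"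
    unfolding DD_def by (rule sum.cong) auto
  also have "\<dots> = bdry s t c v"
    unfolding bdry_def using fs by (simp add: sum_subtractf sum.inter_filter)
  finally show ?thesis by simp
qed

lemma sum_DD:
  assumes "finite R" "finite A"
  shows "(\<Sum>v\<in>R. DD s t A c v) = (\<Sum>e\<in>A. c e * (of_bool (t e \<in> R) - of_bool (s e \<in> R)))"
proof -
  have "(\<Sum>v\<in>R. DD s t A c v) = (\<Sum>e\<in>A. \<Sum>v\<in>R. c e * (of_bool (t e = v) - of_bool (s e = v)))"
    unfolding DD_def by (rule sum.swap)
  also have "\<dots> = (\<Sum>e\<in>A. c e * (of_bool (t e \<in> R) - of_bool (s e \<in> R)))"
  proof (rule sum.cong)
    fix e assume "e \<in> A"
    have "(\<Sum>v\<in>R. c e * (of_bool (t e = v) - of_bool (s e = v)))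
        = c e * ((\<Sum>v\<in>R. of_bool (t e = v)) - (\<Sum>v\<in>R. of_bool (s e = v)))"
      by (simp add: sum_distrib_left sum_subtractf right_diff_distrib)
    also have "\<dots> = c e * (of_bool (t e \<in> R) - of_bool (s e \<in> R))"
      using assms(1) by (simp add: of_bool_def sum.delta')
    finally show "(\<Sum>v\<in>R. c e * (of_bool (t e = v) - of_bool (s e = v))) = c e * (of_bool (t e \<in> R) - of_bool (s e \<in> R))" .
  qed simp
  finally show ?thesis .
qed

lemma flip_in:
  assumes "finite S" "e \<notin> S"
  shows "DD s t (insert e S) (\<lambda>_. 1) u = DD s t S (\<lambda>_. 1) u + (of_bool (t e = u) - of_bool (s e = u))"
  using assms by (simp add: DD_def)

lemma flip_out:
  assumes "finite S" "e \<in> S"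
  shows "DD s t (S - {e}) (\<lambda>_. 1) u = DD s t S (\<lambda>_. 1) u - (of_bool (t e = u) - of_bool (s e = u))"
  using assms unfolding DD_def by (simp add: sum.remove)

lemma aug_n:
  assumes fin: "finite A" and SA: "S \<subseteq> A"
  shows "(v,w) \<in> (stp s t A S)^^n \<Longrightarrow> (\<forall>m<n. (v,w) \<notin> (stp s t A S)^^m) \<Longrightarrow>
    \<exists>S'. S' \<subseteq> A \<and> (\<forall>u. DD s t S' (\<lambda>_. 1) u = DD s t S (\<lambda>_. 1) u + of_bool (u = v) - of_bool (u = w))
      \<and> (\<forall>e. (e \<in> S') \<noteq> (e \<in> S) \<longrightarrow> (\<exists>m\<le>n. (v, s e) \<in> (stp s t A S)^^m) \<and> (\<exists>m\<le>n. (v, t e) \<in> (stp s t A S)^^m))"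
proof (induction n arbitrary: w)
  case 0
  then have "w = v" by simp
  then show ?case using SA by (intro exI[of _ S]) auto
next
  case (Suc n)
  let ?R = "stp s t A S"
  from Suc.prems(1) obtain x where vx: "(v,x) \<in> ?R^^n" and xw: "(x,w) \<in> ?R" by auto
  have minx: "\<forall>m<n. (v,x) \<notin> ?R^^m"
  proof (intro allI impI notI)
    fix m assume "m<n" "(v,x)\<in>?R^^m"
    then have "(v,w) \<in> ?R^^Suc m" using xw by auto
    moreover have "Suc m < Suc n" using \<open>m<n\<close> by simp
    ultimately show False using Suc.prems(2) by blast
  qed
  from Suc.IH[OF vx minx] obtain S'' where S''A: "S''\<subseteq>A"
    and dS'': "\<forall>u. DD s t S'' (\<lambda>_. 1) u = DD s t S (\<lambda>_. 1) u + of_bool (u = v) - of_bool (u = x)"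
    and ch: "\<forall>e. (e \<in> S'') \<noteq> (e \<in> S) \<longrightarrow> (\<exists>m\<le>n. (v, s e) \<in> ?R^^m) \<and> (\<exists>m\<le>n. (v, t e) \<in> ?R^^m)"
    by blast
  have wfar: "\<forall>m\<le>n. (v,w) \<notin> ?R^^m" using Suc.prems(2) by auto
  from xw obtain e where eA: "e\<in>A" and ecase: "(e\<notin>S \<and> t e = x \<and> s e = w) \<or> (e\<in>S \<and> s e = x \<and> t e = w)"
    unfolding stp_def by auto
  have same: "(e\<in>S'') = (e\<in>S)" using ch wfar ecase by metis
  have finS'': "finite S''" using fin S''A finite_subset by blast
  from ecase show ?case
  proof
    assume h: "e\<notin>S \<and> t e = x \<and> s e = w"
    show ?case
    proof -
      have c1: "insert e S'' \<subseteq> A" using eA S''A by auto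
      have c2: "\<forall>u. DD s t (insert e S'') (\<lambda>_. 1) u = DD s t S (\<lambda>_. 1) u + of_bool (u = v) - of_bool (u = w)"
      proof
      fix u
      show "DD s t (insert e S'') (\<lambda>_. 1) u = DD s t S (\<lambda>_. 1) u + of_bool (u = v) - of_bool (u = w)"
          using flip_in[OF finS'', of e s t u] same h dS'' by auto
      qed
      have c3: "\<forall>e'. (e' \<in> insert e S'') \<noteq> (e' \<in> S) \<longrightarrow> (\<exists>m\<le>Suc n. (v, s e') \<in> ?R^^m) \<and> (\<exists>m\<le>Suc n. (v, t e') \<in> ?R^^m)"
      proof (intro allI impI)
      fix e' assume "(e' \<in> insert e S'') \<noteq> (e' \<in> S)"
      then show "(\<exists>m\<le>Suc n. (v, s e') \<in> ?R^^m) \<and> (\<exists>m\<le>Suc n. (v, t e') \<in> ?R^^m)"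
      proof (cases "e' = e")
        case True
        then show ?thesis using h Suc.prems(1) vx by (metis le_SucI order_refl)
      next
        case False
        then have "(e' \<in> S'') \<noteq> (e' \<in> S)" using \<open>(e' \<in> insert e S'') \<noteq> (e' \<in> S)\<close> by auto
        then show ?thesis using ch by (meson le_SucI)
      qed
      qed
      show ?thesis using c1 c2 c3 by blast
    qed
  next
    assume h: "e\<in>S \<and> s e = x \<and> t e = w"
    show ?case
    proof -
      have c1: "S'' - {e} \<subseteq> A" using eA S''A by auto
      have c2: "\<forall>u. DD s t (S'' - {e}) (\<lambda>_. 1) u = DD s t S (\<lambda>_. 1) u + of_bool (u = v) - of_bool (u = w)"
      proof
      fix u
      show "DD s t (S'' - {e}) (\<lambda>_. 1) u = DD s t S (\<lambda>_. 1) u + of_bool (u = v) - of_bool (u = w)"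
          using flip_out[OF finS'', of e s t u] same h dS'' by auto
      qed
      have c3: "\<forall>e'. (e' \<in> S'' - {e}) \<noteq> (e' \<in> S) \<longrightarrow> (\<exists>m\<le>Suc n. (v, s e') \<in> ?R^^m) \<and> (\<exists>m\<le>Suc n. (v, t e') \<in> ?R^^m)"
      proof (intro allI impI)
      fix e' assume "(e' \<in> S'' - {e}) \<noteq> (e' \<in> S)"
      then show "(\<exists>m\<le>Suc n. (v, s e') \<in> ?R^^m) \<and> (\<exists>m\<le>Suc n. (v, t e') \<in> ?R^^m)"
      proof (cases "e' = e")
        case True
        then show ?thesis using h Suc.prems(1) vx by (metis le_SucI order_refl)
      next
        case False
        then have "(e' \<in> S'') \<noteq> (e' \<in> S)" using \<open>(e' \<in> S'' - {e}) \<noteq> (e' \<in> S)\<close> by auto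
        then show ?thesis using ch by (meson le_SucI)
      qed
      qed
      show ?thesis using c1 c2 c3 by blast
    qed
  qed
qed

lemma aug:
  assumes fin: "finite A" and SA: "S \<subseteq> A" and vw: "(v,w) \<in> (stp s t A S)^*"
  shows "\<exists>S'. S' \<subseteq> A \<and> (\<forall>u. DD s t S' (\<lambda>_. 1) u = DD s t S (\<lambda>_. 1) u + of_bool (u = v) - of_bool (u = w))"
proof -
  let ?R = "stp s t A S"
  have ex: "\<exists>n. (v,w) \<in> ?R^^n" using vw rtrancl_power by blast
  define n where "n = (LEAST n. (v,w) \<in> ?R^^n)"
  have n1: "(v,w) \<in> ?R^^n" unfolding n_def using ex by (rule LeastI_ex)
  have n2: "\<forall>m<n. (v,w) \<notin> ?R^^m" unfolding n_def using not_less_Least by blast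
  from aug_n[OF fin SA n1 n2] show ?thesis by blast
qed

lemma cut:
  fixes p :: int
  assumes fin: "finite A" and SA: "S \<subseteq> A" and rng: "\<forall>e. 0 \<le> \<alpha> e \<and> \<alpha> e < p"
    and pos: "DD s t A \<alpha> v - p * DD s t S (\<lambda>_. 1) v > 0"
  shows "\<exists>w. (v,w) \<in> (stp s t A S)^* \<and> DD s t A \<alpha> w - p * DD s t S (\<lambda>_. 1) w < 0"
proof (rule ccontr)
  assume neg: "\<not> ?thesis"
  let ?R = "stp s t A S"
  let ?c = "\<lambda>w. DD s t A \<alpha> w - p * DD s t S (\<lambda>_. 1) w"
  define R where "R = {y. (v,y) \<in> ?R^*}"
  have RV: "R \<subseteq> insert v (s`A \<union> t`A)"
  proof
    fix y assume "y\<in>R"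
    then have "(v,y)\<in>?R^*" by (simp add: R_def)
    then show "y \<in> insert v (s`A \<union> t`A)"
      by (induction rule: rtrancl_induct) (auto simp: stp_def)
  qed
  have finR: "finite R" using RV fin finite_subset by blast
  have closed: "\<And>y z. y \<in> R \<Longrightarrow> (y,z) \<in> ?R \<Longrightarrow> z \<in> R"
    unfolding R_def by (auto intro: rtrancl_into_rtrancl)
  have ge: "\<forall>y\<in>R. ?c y \<ge> 0" using neg unfolding R_def by force
  have vR: "v \<in> R" unfolding R_def by simp
  have "0 < (\<Sum>y\<in>R. ?c y)" by (rule sum_pos2[where f = ?c, OF finR vR]) (use pos ge in auto)
  also have "(\<Sum>y\<in>R. ?c y) = (\<Sum>y\<in>R. DD s t A \<alpha> y) - p * (\<Sum>y\<in>R. DD s t S (\<lambda>_. 1) y)"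
    by (simp add: sum_subtractf sum_distrib_left)
  also have "\<dots> = (\<Sum>e\<in>A. \<alpha> e * (of_bool (t e \<in> R) - of_bool (s e \<in> R)))
       - p * (\<Sum>e\<in>S. (of_bool (t e \<in> R) - of_bool (s e \<in> R)))"
    using sum_DD[OF finR fin] sum_DD[OF finR finite_subset[OF SA fin]] by simp
  also have "(\<Sum>e\<in>S. (of_bool (t e \<in> R) - of_bool (s e \<in> R)) :: int)
      = (\<Sum>e\<in>A. of_bool (e \<in> S) * (of_bool (t e \<in> R) - of_bool (s e \<in> R)))"
    by (rule sum.mono_neutral_cong_left) (use fin SA in auto)
  also have "(\<Sum>e\<in>A. \<alpha> e * (of_bool (t e \<in> R) - of_bool (s e \<in> R)))
       - p * (\<Sum>e\<in>A. of_bool (e \<in> S) * (of_bool (t e \<in> R) - of_bool (s e \<in> R)))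
     = (\<Sum>e\<in>A. (\<alpha> e - p * of_bool (e \<in> S)) * (of_bool (t e \<in> R) - of_bool (s e \<in> R)))"
    by (simp add: sum_subtractf sum_distrib_left left_diff_distrib mult.assoc)
  also have "\<dots> \<le> 0"
  proof (rule sum_nonpos)
    fix e assume eA: "e \<in> A"
    show "(\<alpha> e - p * of_bool (e \<in> S)) * (of_bool (t e \<in> R) - of_bool (s e \<in> R)) \<le> 0"
    proof (cases "t e \<in> R = (s e \<in> R)")
      case True then show ?thesis by simp
    next
      case False
      show ?thesis
      proof (cases "t e \<in> R")
        case True
        with False have "s e \<notin> R" by simp
        have "e \<in> S"
        proof (rule ccontr)
          assume "e \<notin> S"
          then have "(t e, s e) \<in> ?R" using eA unfolding stp_def by auto
          with closed True \<open>s e \<notin> R\<close> show False by blast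
        qed
        then show ?thesis using True \<open>s e \<notin> R\<close> rng[rule_format, of e] by simp
      next
        case tF: False
        with False have sR: "s e \<in> R" by simp
        have "e \<notin> S"
        proof
          assume "e \<in> S"
          then have "(s e, t e) \<in> ?R" using eA unfolding stp_def by auto
          with closed sR tF show False by blast
        qed
        then show ?thesis using tF sR rng[rule_format, of e] by simp
      qed
    qed
  qed
  finally show False by simp
qed

theorem proposition2p1:
  fixes src tgt :: "'e \<Rightarrow> 'v" and p :: int and \<alpha> :: "'e \<Rightarrow> int"
  assumes "p \<ge> 1"
    and "modp_cycle src tgt p \<alpha>"
  shows "\<exists>\<beta>. int_cycle src tgt \<beta> \<and> (\<forall>e. \<beta> e mod p = \<alpha> e)
              \<and> mass_int \<beta> \<le> p * int (mass_modp \<alpha>)"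
proof -
  define A where "A = supp \<alpha>"
  have finA: "finite A" and rng: "\<forall>e. 0 \<le> \<alpha> e \<and> \<alpha> e < p"
    and bmod: "\<forall>v. bdry src tgt \<alpha> v mod p = 0"
    using assms(2) unfolding A_def modp_cycle_def modp_chain_def by auto
  define V where "V = src ` A \<union> tgt ` A"
  have finV: "finite V" unfolding V_def using finA by simp
  define c where "c S v = DD src tgt A \<alpha> v - p * DD src tgt S (\<lambda>_. 1) v" for S v
  have cdvd: "p dvd c S v" for S v
  proof -
    have "DD src tgt A \<alpha> v = bdry src tgt \<alpha> v" using bdry_DD[OF finA, of \<alpha> src tgt v] A_def by simp
    then have "p dvd DD src tgt A \<alpha> v" using bmod by (simp add: dvd_eq_mod_eq_0)
    then show ?thesis unfolding c_def by simp
  qed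
  have cout: "c S v = 0" if "S \<subseteq> A" "v \<notin> V" for S v
  proof -
    have "DD src tgt A \<alpha> v = 0" unfolding DD_def
      by (rule sum.neutral) (use that in \<open>auto simp: V_def\<close>)
    moreover have "DD src tgt S (\<lambda>_. 1) v = 0" unfolding DD_def
      by (rule sum.neutral) (use that in \<open>auto simp: V_def\<close>)
    ultimately show ?thesis unfolding c_def by simp
  qed
  have csum: "(\<Sum>v\<in>V. c S v) = 0" if "S \<subseteq> A" for S
  proof -
    have finS: "finite S" using that finA finite_subset by blast
    have "(\<Sum>v\<in>V. c S v) = (\<Sum>v\<in>V. DD src tgt A \<alpha> v) - p * (\<Sum>v\<in>V. DD src tgt S (\<lambda>_. 1) v)"
      unfolding c_def by (simp add: sum_subtractf sum_distrib_left)
    also have "(\<Sum>v\<in>V. DD src tgt A \<alpha> v) = 0"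
      unfolding sum_DD[OF finV finA] by (rule sum.neutral) (auto simp: V_def)
    also have "(\<Sum>v\<in>V. DD src tgt S (\<lambda>_. 1) v) = 0"
      unfolding sum_DD[OF finV finS] by (rule sum.neutral) (use that in \<open>auto simp: V_def\<close>)
    finally show ?thesis by simp
  qed
  have main: "\<forall>S. S \<subseteq> A \<longrightarrow> nat (\<Sum>v\<in>V. \<bar>c S v\<bar>) = n \<longrightarrow> (\<exists>S'. S' \<subseteq> A \<and> (\<forall>v. c S' v = 0))" for n
  proof (induction n rule: less_induct)
    case (less n)
    show ?case
    proof (intro allI impI)
      fix S assume SA: "S \<subseteq> A" and Sn: "nat (\<Sum>v\<in>V. \<bar>c S v\<bar>) = n"
      show "\<exists>S'. S' \<subseteq> A \<and> (\<forall>v. c S' v = 0)"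
      proof (cases "\<forall>v\<in>V. c S v \<le> 0")
        case True
        have "\<forall>v\<in>V. - c S v = 0"
          using sum_nonneg_eq_0_iff[OF finV, of "\<lambda>v. - c S v"] True csum[OF SA]
          by (simp add: sum_negf)
        then have "\<forall>v. c S v = 0" using cout[OF SA] by (metis neg_equal_0_iff_equal)
        then show ?thesis using SA by blast
      next
        case False
        then obtain v where vV: "v \<in> V" and cv: "c S v > 0" by (auto simp: not_le)
        obtain w where vw: "(v,w) \<in> (stp src tgt A S)^*" and cw: "c S w < 0"
          using cut[OF finA SA rng, of src tgt v] cv unfolding c_def by blast
        obtain S' where S'A: "S' \<subseteq> A"
          and dS': "\<forall>u. DD src tgt S' (\<lambda>_. 1) u = DD src tgt S (\<lambda>_. 1) u + of_bool (u = v) - of_bool (u = w)"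
          using aug[OF finA SA vw] by blast
        have vw_ne: "v \<noteq> w" using cv cw by auto
        have c': "c S' u = c S u - p * (of_bool (u = v) - of_bool (u = w))" for u
        proof -
          have "DD src tgt S' (\<lambda>_. 1) u = DD src tgt S (\<lambda>_. 1) u + of_bool (u = v) - of_bool (u = w)"
            using dS' by blast
          then show ?thesis unfolding c_def by (simp add: right_diff_distrib distrib_left)
        qed
        have pv: "p \<le> c S v" using cdvd[of S v] cv by (simp add: zdvd_imp_le)
        have pw: "p \<le> - c S w" using cdvd[of S w] cw by (simp add: zdvd_imp_le)
        have le: "\<forall>u\<in>V. \<bar>c S' u\<bar> \<le> \<bar>c S u\<bar>"
        proof
          fix u assume "u \<in> V"
          show "\<bar>c S' u\<bar> \<le> \<bar>c S u\<bar>"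
            using c'[of u] pv pw vw_ne assms(1) by (cases "u = v"; cases "u = w") auto
        qed
        have lt: "\<exists>u\<in>V. \<bar>c S' u\<bar> < \<bar>c S u\<bar>"
        proof -
          have "\<bar>c S' v\<bar> < \<bar>c S v\<bar>" using c'[of v] pv vw_ne assms(1) cv by simp
          then show ?thesis using vV by blast
        qed
        have "(\<Sum>u\<in>V. \<bar>c S' u\<bar>) < (\<Sum>u\<in>V. \<bar>c S u\<bar>)"
          by (rule sum_strict_mono_ex1[OF finV le lt])
        then have "nat (\<Sum>u\<in>V. \<bar>c S' u\<bar>) < n" 
        proof -
          have "0 \<le> (\<Sum>u\<in>V. \<bar>c S' u\<bar>)" by (rule sum_nonneg) simp
          with \<open>(\<Sum>u\<in>V. \<bar>c S' u\<bar>) < (\<Sum>u\<in>V. \<bar>c S u\<bar>)\<close> Sn show ?thesis using nat_less_eq_zless by blast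
        qed
        then show ?thesis using less.IH S'A by blast
      qed
    qed
  qed
  obtain S where SA: "S \<subseteq> A" and c0: "\<forall>v. c S v = 0" using main[rule_format, OF empty_subsetI refl] by blast
  have finS: "finite S" using SA finA finite_subset by blast
  define \<beta> where "\<beta> e = \<alpha> e - p * of_bool (e \<in> S)" for e
  have suppb: "supp \<beta> \<subseteq> A" using SA unfolding \<beta>_def A_def supp_def by auto
  have bd: "bdry src tgt \<beta> v = c S v" for v
  proof -
    have "bdry src tgt \<beta> v = DD src tgt A \<beta> v" by (rule bdry_DD[OF finA suppb])
    also have "\<dots> = (\<Sum>e\<in>A. \<alpha> e * (of_bool (tgt e = v) - of_bool (src e = v)))
       - p * (\<Sum>e\<in>A. of_bool (e \<in> S) * (of_bool (tgt e = v) - of_bool (src e = v)))"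
      unfolding DD_def \<beta>_def by (simp add: sum_subtractf sum_distrib_left left_diff_distrib mult.assoc)
    also have "(\<Sum>e\<in>A. of_bool (e \<in> S) * (of_bool (tgt e = v) - of_bool (src e = v)) :: int)
       = (\<Sum>e\<in>S. (of_bool (tgt e = v) - of_bool (src e = v)))"
      by (rule sum.mono_neutral_cong_right) (use finA SA in auto)
    finally show ?thesis unfolding c_def DD_def by simp
  qed
  have cyc: "int_cycle src tgt \<beta>"
    unfolding int_cycle_def using finite_subset[OF suppb finA] bd c0 by simp
  have md: "\<forall>e. \<beta> e mod p = \<alpha> e"

  proof
    fix e show "\<beta> e mod p = \<alpha> e" using rng[rule_format, of e]
      by (cases "e \<in> S") (simp_all add: \<beta>_def)
  qed
  have "mass_int \<beta> = (\<Sum>e\<in>supp \<beta>. \<bar>\<beta> e\<bar>)" by (simp add: mass_int_def)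
  also have "\<dots> \<le> (\<Sum>e\<in>A. \<bar>\<beta> e\<bar>)" by (rule sum_mono2[OF finA suppb]) auto
  also have "\<dots> \<le> (\<Sum>e\<in>A. p)" 
  proof (rule sum_mono)
    fix e assume "e \<in> A"
    show "\<bar>\<beta> e\<bar> \<le> p" using rng[rule_format, of e] by (cases "e \<in> S") (simp_all add: \<beta>_def)
  qed
  also have "\<dots> = p * int (mass_modp \<alpha>)" by (simp add: mass_modp_def A_def)
  finally show ?thesis using cyc md by blast
qed

end
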